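(* Let $\alpha\ge0$ satisfy $\alpha^2+\alpha V^0-\gamma<0$, let $u_0\in C_\alpha$, and let $(s,u)$ be the solution of the free-interface problem with initial data $u_0$. Then for all $t>0$ $$|T_2(t)u_0|_\alpha\le 2\exp[(-\gamma+\alpha^2+\alpha V^0)t]\,|u_0|_\alpha .$$
   Context: Fix $\gamma>0$, $0<v_0\le V^0$. The kinetics $g:[0,\infty)\to\mathbb{R}$ is monotonically decreasing, differentiable, $|g'|\le C$, $-V^0\le g\le -v_0$. Free-interface problem: find $s(t)$, $s(0)=0$, and $u(x,t)$ with $u_t=u_{xx}-\gamma u$ for $x\ne s(t)$, $t>0$; $u(x,0)=u_0(x)$; $g(u(s(t),t))=v(t)$; $u_x^+(s(t),t)-u_x^-(s(t),t)=v(t)$, with $v=s'$, $u_x^\pm$ one-sided derivatives from right/left, $u\to0$ at $\pm\infty$; the classical solution exists and is unique, and $-V^0\le v(t)\le -v_0$. With $G(x,t,\xi,\tau)=[4\pi(t-\tau)]^{-1/2}\exp\{-(x-\xi)^2/(4(t-\tau))\}$, define $(T_2(t)u_0)(x)=e^{-\gamma t}\int_{-\infty}^{\infty}G(x,t,\xi,0)u_0(\xi)d\xi$. Weighted norms: $|f|_\alpha=\sup_x e^{\alpha|x|}|f(x)|$, $C_\alpha=\{f\in C(\mathbb{R}):|f|_\alpha<\infty\}$; for a function $f(\cdot,t)$ at time $t$ associated with the solution (such as $T_2(t)u_0$), $|f(\cdot,t)|_\alpha:=\sup_x e^{\alpha|x-s(t)|}|f(x,t)|$ (weight centred at the interface),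 while $|u_0|_\alpha$ uses the weight centred at $0$. *)

theory Defs
  imports "HOL-Analysis.Analysis"
begin

definition heatG :: "real \<Rightarrow> real \<Rightarrow> real \<Rightarrow> real \<Rightarrow> real" where
  "heatG x t \<xi> \<tau> = (1 / sqrt (4 * pi * (t - \<tau>))) * exp (- ((x - \<xi>)^2) / (4 * (t - \<tau>)))"

definition T2 :: "real \<Rightarrow> real \<Rightarrow> (real \<Rightarrow> real) \<Rightarrow> real \<Rightarrow> real" where
  "T2 \<gamma> t u0 x = exp (- \<gamma> * t) * integral UNIV (\<lambda>\<xi>. heatG x t \<xi> 0 * u0 \<xi>)"

definition wnorm :: "real \<Rightarrow> real \<Rightarrow> (real \<Rightarrow> real) \<Rightarrow> real" where
  "wnorm \<alpha> c f = (SUP x. exp (\<alpha> * \<bar>x - c\<bar>) * \<bar>f x\<bar>)"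

definition C_alpha :: "real \<Rightarrow> (real \<Rightarrow> real) set" where
  "C_alpha \<alpha> = {f. continuous_on UNIV f \<and> bdd_above (range (\<lambda>x. exp (\<alpha> * \<bar>x\<bar>) * \<bar>f x\<bar>))}"

definition kinetics_ok :: "(real \<Rightarrow> real) \<Rightarrow> real \<Rightarrow> real \<Rightarrow> real \<Rightarrow> bool" where
  "kinetics_ok g C v0 V0 \<longleftrightarrow>
     antimono_on {0..} g \<and>
     (\<exists>g'. \<forall>y\<ge>0. (g has_real_derivative g' y) (at y within {0..}) \<and> \<bar>g' y\<bar> \<le> C) \<and>
     (\<forall>y\<ge>0. - V0 \<le> g y \<and> g y \<le> - v0)"

text \<open>Classical solution (s,u) of the free-interface problem with data u0;
  u is written as u x t, and v = s'.\<close>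
definition free_interface_solution ::
  "(real \<Rightarrow> real) \<Rightarrow> real \<Rightarrow> (real \<Rightarrow> real) \<Rightarrow> (real \<Rightarrow> real) \<Rightarrow> (real \<Rightarrow> real \<Rightarrow> real) \<Rightarrow> bool" where
  "free_interface_solution g \<gamma> u0 s u \<longleftrightarrow>
     s 0 = 0 \<and> continuous_on {0..} s \<and>
     continuous_on (UNIV \<times> {0..}) (\<lambda>(x,t). u x t) \<and>
     (\<forall>x. u x 0 = u0 x) \<and>
     (\<exists>v ux uxx ut uxp uxm.
        (\<forall>t>0. (s has_real_derivative v t) (at t)) \<and>
        (\<forall>t>0. \<forall>x. x \<noteq> s t \<longrightarrow>
            ((\<lambda>y. u y t) has_real_derivative ux x t) (at x) \<and>
            ((\<lambda>y. ux y t) has_real_derivative uxx x t) (at x) \<and>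
            ((\<lambda>\<tau>. u x \<tau>) has_real_derivative ut x t) (at t) \<and>
            ut x t = uxx x t - \<gamma> * u x t) \<and>
        (\<forall>t>0. u (s t) t \<ge> 0 \<and> g (u (s t) t) = v t) \<and>
        (\<forall>t>0. ((\<lambda>y. u y t) has_real_derivative uxp t) (at (s t) within {s t..}) \<and>
               ((\<lambda>y. u y t) has_real_derivative uxm t) (at (s t) within {..s t}) \<and>
               uxp t - uxm t = v t) \<and>
        (\<forall>t>0. ((\<lambda>x. u x t) \<longlongrightarrow> 0) at_top \<and> ((\<lambda>x. u x t) \<longlongrightarrow> 0) at_bot))"

end

theory Submission
  imports Defs "HOL-Probability.Distributions"
begin

lemma heatG_normal:
  assumes "t > 0"
  shows "heatG y t \<xi> 0 = normal_density y (sqrt (2*t)) \<xi>"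
  using assms unfolding heatG_def normal_density_def
  by (simp add: power2_eq_square algebra_simps)

lemma heatG_nonneg: "t > 0 \<Longrightarrow> heatG y t \<xi> 0 \<ge> 0"
  by (simp add: heatG_normal)

lemma heatG_int1:
  assumes "t > 0"
  shows "((\<lambda>\<xi>. heatG y t \<xi> 0) has_integral 1) UNIV"
proof -
  have "((normal_density y (sqrt (2*t))) has_integral 1) UNIV"
  proof -
    have "(normal_density y (sqrt (2*t)) has_integral (integral\<^sup>L lborel (normal_density y (sqrt (2*t))))) UNIV"
      by (rule has_integral_integral_real) (rule integrable_normal_density, use assms in simp)
    moreover have "integral\<^sup>L lborel (normal_density y (sqrt (2*t))) = 1"
      by (rule integral_normal_density) (use assms in simp)
    ultimately show ?thesis by simp
  qed
  moreover have "(\<lambda>\<xi>. heatG y t \<xi> 0) = normal_density y (sqrt (2*t))"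
    by (rule ext) (simp add: heatG_normal assms)
  ultimately show ?thesis by simp
qed

lemma heatG_exp_int:
  assumes "t > 0"
  shows "((\<lambda>\<xi>. heatG x t \<xi> 0 * exp (a * (x - \<xi>))) has_integral exp (a^2 * t)) UNIV"
proof -
  have eq: "heatG x t \<xi> 0 * exp (a * (x - \<xi>)) = exp (a^2 * t) * heatG (x - 2*a*t) t \<xi> 0" for \<xi>
  proof -
    have "- ((x - \<xi>)^2) / (4 * (t - 0)) + a * (x - \<xi>) = a^2 * t + (- ((x - 2*a*t - \<xi>)^2) / (4 * (t - 0)))"
      using assms by (simp add: field_simps power2_eq_square)
    then show ?thesis unfolding heatG_def
      by (simp add: exp_add[symmetric] mult_exp_exp)
  qed
  show ?thesis unfolding eq
    using has_integral_mult_right[OF heatG_int1[OF assms, of "x - 2*a*t"], of "exp (a^2*t)"] by simp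
qed

lemma s_bound:
  assumes kin: "kinetics_ok g C v0 V0"
    and fis: "free_interface_solution g \<gamma> u0 s u"
    and t: "t > 0" and v0: "v0 > 0"
  shows "\<bar>s t\<bar> \<le> V0 * t"
proof -
  from fis obtain v where s0: "s 0 = 0" and sc: "continuous_on {0..} s"
    and sd: "\<forall>t>0. (s has_real_derivative v t) (at t)"
    and gv: "\<forall>t>0. u (s t) t \<ge> 0 \<and> g (u (s t) t) = v t"
    unfolding free_interface_solution_def by blast
  have gb: "\<forall>y\<ge>0. - V0 \<le> g y \<and> g y \<le> - v0" using kin unfolding kinetics_ok_def by blast
  have "continuous_on {0..t} s" using sc by (rule continuous_on_subset) auto
  moreover have "\<forall>x. 0 < x \<and> x < t \<longrightarrow> s differentiable (at x)"
    using sd real_differentiable_def by blast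
  ultimately obtain l z where z: "0 < z" "z < t" and dz: "DERIV s z :> l"
    and eq: "s t - s 0 = (t - 0) * l"
    using MVT[OF t] by blast
  have "l = v z" using DERIV_unique dz sd z(1) by blast
  moreover have "- V0 \<le> v z \<and> v z \<le> - v0" using gv gb z(1) by metis
  ultimately have "- V0 \<le> l \<and> l \<le> - v0" by simp
  then have la: "\<bar>l\<bar> \<le> V0" using v0 by linarith
  have "s t = t * l" using eq s0 by simp
  then have "\<bar>s t\<bar> = t * \<bar>l\<bar>" using t by (simp add: abs_mult)
  also have "\<dots> \<le> t * V0" using la t by (simp add: mult_left_mono)
  finally show ?thesis by (simp add: mult.commute)
qed

theorem mainTheorem3:
  fixes g :: "real \<Rightarrow> real" and \<gamma> v0 V0 C \<alpha> :: real
    and u0 s :: "real \<Rightarrow> real" and u :: "real \<Rightarrow> real \<Rightarrow> real"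
  assumes "\<gamma> > 0" and "0 < v0" and "v0 \<le> V0"
    and "kinetics_ok g C v0 V0"
    and "\<alpha> \<ge> 0" and "\<alpha>^2 + \<alpha> * V0 - \<gamma> < 0"
    and "u0 \<in> C_alpha \<alpha>"
    and "free_interface_solution g \<gamma> u0 s u"
    and "t > 0"
  shows "bdd_above (range (\<lambda>x. exp (\<alpha> * \<bar>x - s t\<bar>) * \<bar>T2 \<gamma> t u0 x\<bar>)) \<and>
         wnorm \<alpha> (s t) (T2 \<gamma> t u0)
           \<le> 2 * exp ((- \<gamma> + \<alpha>^2 + \<alpha> * V0) * t) * wnorm \<alpha> 0 u0"
proof -
  note t = \<open>t > 0\<close>
  have sb: "\<bar>s t\<bar> \<le> V0 * t" using s_bound assms(2,4,8,9) by blast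
  define M where "M = wnorm \<alpha> 0 u0"
  have bdd: "bdd_above (range (\<lambda>x. exp (\<alpha> * \<bar>x\<bar>) * \<bar>u0 x\<bar>))"
    using assms(7) unfolding C_alpha_def by auto
  have ub: "exp (\<alpha> * \<bar>x\<bar>) * \<bar>u0 x\<bar> \<le> M" for x
    unfolding M_def wnorm_def using cSUP_upper[OF UNIV_I bdd, of x] by simp
  have M0: "0 \<le> M" using ub[of 0] abs_ge_zero[of "u0 0"] by simp
  have u0b: "\<bar>u0 \<xi>\<bar> \<le> M * exp (- \<alpha> * \<bar>\<xi>\<bar>)" for \<xi>
  proof -
    have "\<bar>u0 \<xi>\<bar> = exp (- \<alpha> * \<bar>\<xi>\<bar>) * (exp (\<alpha> * \<bar>\<xi>\<bar>) * \<bar>u0 \<xi>\<bar>)"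
      by (simp add: mult.assoc[symmetric] exp_add[symmetric])
    also have "\<dots> \<le> exp (- \<alpha> * \<bar>\<xi>\<bar>) * M" using ub by (simp add: mult_left_mono)
    finally show ?thesis by (simp add: mult.commute)
  qed
  define K where "K = 2 * exp ((- \<gamma> + \<alpha>^2 + \<alpha> * V0) * t) * M"
  have pw: "exp (\<alpha> * \<bar>x - s t\<bar>) * \<bar>T2 \<gamma> t u0 x\<bar> \<le> K" for x
  proof -
    define I where "I = integral UNIV (\<lambda>\<xi>. heatG x t \<xi> 0 * u0 \<xi>)"
    define B where "B = (\<lambda>\<xi>. M * exp (- \<alpha> * \<bar>x\<bar>) *
       (heatG x t \<xi> 0 * exp (\<alpha> * (x - \<xi>)) + heatG x t \<xi> 0 * exp ((- \<alpha>) * (x - \<xi>))))"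
    have Bint: "(B has_integral M * exp (- \<alpha> * \<bar>x\<bar>) * (2 * exp (\<alpha>^2 * t))) UNIV"
    proof -
      have "((\<lambda>\<xi>. heatG x t \<xi> 0 * exp (\<alpha> * (x - \<xi>)) + heatG x t \<xi> 0 * exp ((- \<alpha>) * (x - \<xi>)))
             has_integral (exp (\<alpha>^2 * t) + exp ((- \<alpha>)^2 * t))) UNIV"
        by (intro has_integral_add heatG_exp_int t)
      then have "((\<lambda>\<xi>. heatG x t \<xi> 0 * exp (\<alpha> * (x - \<xi>)) + heatG x t \<xi> 0 * exp ((- \<alpha>) * (x - \<xi>)))
             has_integral (2 * exp (\<alpha>^2 * t))) UNIV" by simp
      from has_integral_mult_right[OF this, of "M * exp (- \<alpha> * \<bar>x\<bar>)"]
      show ?thesis unfolding B_def by simp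
    qed
    have Ib: "\<bar>I\<bar> \<le> M * exp (- \<alpha> * \<bar>x\<bar>) * (2 * exp (\<alpha>^2 * t))"
    proof (cases "(\<lambda>\<xi>. heatG x t \<xi> 0 * u0 \<xi>) integrable_on UNIV")
      case True
      have le: "norm (heatG x t \<xi> 0 * u0 \<xi>) \<le> B \<xi>" for \<xi>
      proof -
        have G0: "heatG x t \<xi> 0 \<ge> 0" using heatG_nonneg[OF t] .
        have e1: "exp (- \<alpha> * \<bar>\<xi>\<bar>) \<le> exp (- \<alpha> * \<bar>x\<bar>) * exp (\<alpha> * \<bar>x - \<xi>\<bar>)"
        proof -
          have "- \<alpha> * \<bar>\<xi>\<bar> \<le> - \<alpha> * \<bar>x\<bar> + \<alpha> * \<bar>x - \<xi>\<bar>"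
          proof -
            have "\<alpha> * (\<bar>x\<bar> - \<bar>\<xi>\<bar>) \<le> \<alpha> * \<bar>x - \<xi>\<bar>"
              using assms(5) abs_triangle_ineq2[of x \<xi>] by (rule mult_left_mono[rotated])
            then show ?thesis by (simp add: algebra_simps)
          qed
          then show ?thesis by (simp add: exp_add[symmetric])
        qed
        have e2: "exp (\<alpha> * \<bar>x - \<xi>\<bar>) \<le> exp (\<alpha> * (x - \<xi>)) + exp ((- \<alpha>) * (x - \<xi>))"
        proof (cases "x - \<xi> \<ge> 0")
          case True
          then show ?thesis by (simp add: add_increasing2 less_imp_le)
        next
          case False
          then have "exp (\<alpha> * \<bar>x - \<xi>\<bar>) = exp ((- \<alpha>) * (x - \<xi>))" by (simp add: algebra_simps)
          then show ?thesis by (simp only:) (rule add_increasing, simp_all)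
        qed
        have "norm (heatG x t \<xi> 0 * u0 \<xi>) = heatG x t \<xi> 0 * \<bar>u0 \<xi>\<bar>"
          using G0 by (simp add: abs_mult)
        also have "\<dots> \<le> heatG x t \<xi> 0 * (M * exp (- \<alpha> * \<bar>\<xi>\<bar>))"
          using G0 u0b by (simp add: mult_left_mono)
        also have "\<dots> \<le> heatG x t \<xi> 0 * (M * (exp (- \<alpha> * \<bar>x\<bar>) *
                     (exp (\<alpha> * (x - \<xi>)) + exp ((- \<alpha>) * (x - \<xi>)))))"
        proof -
          have "exp (- \<alpha> * \<bar>\<xi>\<bar>) \<le> exp (- \<alpha> * \<bar>x\<bar>) * (exp (\<alpha> * (x - \<xi>)) + exp ((- \<alpha>) * (x - \<xi>)))"
            using e1 e2 by (meson exp_gt_zero less_imp_le mult_left_mono order_trans)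
          then show ?thesis using G0 M0 by (simp add: mult_left_mono)
        qed
        also have "\<dots> = B \<xi>" unfolding B_def by (simp add: algebra_simps)
        finally show ?thesis .
      qed
      have "norm I \<le> integral UNIV B"
        unfolding I_def
        by (rule integral_norm_bound_integral[OF True _ le]) (use Bint in blast)
      then show ?thesis using Bint integral_unique by (metis real_norm_def)
    next
      case False
      then have "I = 0" unfolding I_def by (simp add: not_integrable_integral)
      then show ?thesis using M0 by simp
    qed
    have T2eq: "\<bar>T2 \<gamma> t u0 x\<bar> = exp (- \<gamma> * t) * \<bar>I\<bar>"
      unfolding T2_def I_def by (simp add: abs_mult)
    have ex: "exp (\<alpha> * \<bar>x - s t\<bar>) \<le> exp (\<alpha> * \<bar>x\<bar>) * exp (\<alpha> * V0 * t)"
    proof -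
      have "\<alpha> * \<bar>x - s t\<bar> \<le> \<alpha> * \<bar>x\<bar> + \<alpha> * V0 * t"
      proof -
        have "\<bar>x - s t\<bar> \<le> \<bar>x\<bar> + V0 * t" using abs_triangle_ineq4[of x "s t"] sb by linarith
        then have "\<alpha> * \<bar>x - s t\<bar> \<le> \<alpha> * (\<bar>x\<bar> + V0 * t)" using assms(5) by (rule mult_left_mono)
        then show ?thesis by (simp add: algebra_simps)
      qed
      then show ?thesis by (simp add: exp_add[symmetric])
    qed
    have "exp (\<alpha> * \<bar>x - s t\<bar>) * \<bar>T2 \<gamma> t u0 x\<bar>
          \<le> (exp (\<alpha> * \<bar>x\<bar>) * exp (\<alpha> * V0 * t)) * (exp (- \<gamma> * t) * (M * exp (- \<alpha> * \<bar>x\<bar>) * (2 * exp (\<alpha>^2 * t))))"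
      unfolding T2eq
    proof (rule mult_mono[OF ex])
      show "exp (- \<gamma> * t) * \<bar>I\<bar> \<le> exp (- \<gamma> * t) * (M * exp (- \<alpha> * \<bar>x\<bar>) * (2 * exp (\<alpha>^2 * t)))"
        using Ib by (rule mult_left_mono) simp
    qed simp_all
    also have "\<dots> = K"
    proof -
      have f1: "exp (\<alpha> * \<bar>x\<bar>) * exp (- \<alpha> * \<bar>x\<bar>) = 1" by (simp add: exp_add[symmetric])
      have f2: "exp (\<alpha> * V0 * t) * exp (- \<gamma> * t) * exp (\<alpha>^2 * t) = exp ((- \<gamma> + \<alpha>^2 + \<alpha> * V0) * t)"
        by (simp add: exp_add[symmetric] algebra_simps)
      have "(exp (\<alpha> * \<bar>x\<bar>) * exp (\<alpha> * V0 * t)) * (exp (- \<gamma> * t) * (M * exp (- \<alpha> * \<bar>x\<bar>) * (2 * exp (\<alpha>^2 * t))))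
          = 2 * M * ((exp (\<alpha> * \<bar>x\<bar>) * exp (- \<alpha> * \<bar>x\<bar>)) * (exp (\<alpha> * V0 * t) * exp (- \<gamma> * t) * exp (\<alpha>^2 * t)))"
        by (simp only: mult_ac)
      also have "\<dots> = K" unfolding K_def f1 f2 by (simp add: mult_ac)
      finally show ?thesis .
    qed
    finally show ?thesis .
  qed
  have "bdd_above (range (\<lambda>x. exp (\<alpha> * \<bar>x - s t\<bar>) * \<bar>T2 \<gamma> t u0 x\<bar>))"
    using pw by (intro bdd_aboveI2) 
  moreover have "wnorm \<alpha> (s t) (T2 \<gamma> t u0) \<le> K"
    unfolding wnorm_def using pw by (intro cSUP_least) auto
  ultimately show ?thesis unfolding K_def M_def by simp
qed

end
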